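(* Let $\Omega$ be a doubly periodic domain (flat $2$-torus), $p_1,\dots,p_N\in\Omega$ (not necessarily distinct) and $\lambda>0$. If $u$ is a solution of $$(1-e^u)\Delta u-e^u|\nabla u|^2=-\lambda e^u(e^u-1)^2+4\pi\sum_{s=1}^N\delta_{p_s}\quad\text{in }\Omega,$$ then $u<0$ throughout $\Omega$.
   Context: All functions are doubly periodic on $\Omega$; $\delta_p$ is the Dirac distribution at $p$. A solution means a function $u$, smooth on $\Omega$ minus the points $p_s$, satisfying $(1-e^u)\Delta u-e^u|\nabla u|^2=-\lambda e^u(e^u-1)^2$ pointwise away from the points, and such that near each point $p$ occurring with multiplicity $n$ among $p_1,\dots,p_N$, $u(x)=n\ln|x-p|^2+f(x)$ with $f$ smooth near $p$ (so $u\to-\infty$ at the points). *)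

theory Defs
  imports "HOL-Analysis.Analysis"
begin

definition pd1 :: "(complex \<Rightarrow> real) \<Rightarrow> complex \<Rightarrow> real" where
  "pd1 f z = deriv (\<lambda>t::real. f (z + complex_of_real t)) 0"

definition pd2 :: "(complex \<Rightarrow> real) \<Rightarrow> complex \<Rightarrow> real" where
  "pd2 f z = deriv (\<lambda>t::real. f (z + \<i> * complex_of_real t)) 0"

fun iter_pd :: "bool list \<Rightarrow> (complex \<Rightarrow> real) \<Rightarrow> complex \<Rightarrow> real" where
  "iter_pd [] f = f"
| "iter_pd (b # bs) f = (if b then pd1 else pd2) (iter_pd bs f)"

definition smooth_on :: "complex set \<Rightarrow> (complex \<Rightarrow> real) \<Rightarrow> bool" where
  "smooth_on S f \<longleftrightarrow> (\<forall>ws. iter_pd ws f differentiable_on S \<and> continuous_on S (iter_pd ws f))"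

definition laplacian :: "(complex \<Rightarrow> real) \<Rightarrow> complex \<Rightarrow> real" where
  "laplacian f z = pd1 (pd1 f) z + pd2 (pd2 f) z"

definition grad_sq :: "(complex \<Rightarrow> real) \<Rightarrow> complex \<Rightarrow> real" where
  "grad_sq f z = (pd1 f z)\<^sup>2 + (pd2 f z)\<^sup>2"

definition lattice :: "complex \<Rightarrow> complex \<Rightarrow> complex set" where
  "lattice w1 w2 = {of_int m * w1 + of_int n * w2 | m n. True}"

text \<open>Lift to the plane of the points p_1..p_N of the torus.\<close>
definition sing_set :: "complex \<Rightarrow> complex \<Rightarrow> nat \<Rightarrow> (nat \<Rightarrow> complex) \<Rightarrow> complex set" where
  "sing_set w1 w2 N p = {p s + w | s w. s \<in> {1..N} \<and> w \<in> lattice w1 w2}"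

text \<open>Multiplicity of the torus point represented by q among p_1..p_N.\<close>
definition mult :: "complex \<Rightarrow> complex \<Rightarrow> nat \<Rightarrow> (nat \<Rightarrow> complex) \<Rightarrow> complex \<Rightarrow> nat" where
  "mult w1 w2 N p q = card {s \<in> {1..N}. q - p s \<in> lattice w1 w2}"

definition is_solution ::
  "complex \<Rightarrow> complex \<Rightarrow> real \<Rightarrow> nat \<Rightarrow> (nat \<Rightarrow> complex) \<Rightarrow> (complex \<Rightarrow> real) \<Rightarrow> bool" where
  "is_solution w1 w2 lam N p u \<longleftrightarrow>
     (\<forall>z. u (z + w1) = u z \<and> u (z + w2) = u z) \<and>
     smooth_on (- sing_set w1 w2 N p) u \<and>
     (\<forall>z. z \<notin> sing_set w1 w2 N p \<longrightarrow>
        (1 - exp (u z)) * laplacian u z - exp (u z) * grad_sq u z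
          = - lam * exp (u z) * (exp (u z) - 1)\<^sup>2) \<and>
     (\<forall>q \<in> sing_set w1 w2 N p. \<exists>r>0. \<exists>f. smooth_on (ball q r) f \<and>
        (\<forall>x \<in> ball q r - {q}.
           u x = real (mult w1 w2 N p q) * ln ((cmod (x - q))\<^sup>2) + f x))"

end

theory Submission
  imports Defs
begin

definition dline :: "(complex \<Rightarrow> real) \<Rightarrow> complex \<Rightarrow> complex \<Rightarrow> real" where
  "dline f d z = deriv (\<lambda>t::real. f (z + complex_of_real t * d)) 0"

lemma pd1_dline: "pd1 f = dline f 1"
  by (auto simp: pd1_def dline_def fun_eq_iff)

lemma pd2_dline: "pd2 f = dline f \<i>"
  by (auto simp: pd2_def dline_def fun_eq_iff mult.commute)

lemma line_has_deriv:
  assumes "(f has_derivative f') (at (z + complex_of_real t * d))"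
  shows "((\<lambda>s. f (z + complex_of_real s * d)) has_real_derivative f' d) (at t)"
proof -
  have l: "bounded_linear f'" using assms by (rule has_derivative_bounded_linear)
  have 1: "((\<lambda>s. z + complex_of_real s * d) has_derivative (\<lambda>h. complex_of_real h * d)) (at t)"
    by (auto intro!: derivative_eq_intros)
  have 2: "((\<lambda>s. f (z + complex_of_real s * d)) has_derivative (\<lambda>h. f' (complex_of_real h * d))) (at t)"
    using has_derivative_compose[OF 1 assms] .
  have 3: "(\<lambda>h. f' (complex_of_real h * d)) = (\<lambda>h. f' d * h)"
  proof
    fix h :: real
    have "complex_of_real h * d = h *\<^sub>R d" by (simp add: scaleR_conv_of_real)
    then show "f' (complex_of_real h * d) = f' d * h"
      using linear_cmul[OF bounded_linear.linear[OF l]] by (simp add: mult.commute)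
  qed
  show ?thesis using 2 unfolding 3 has_field_derivative_def by simp
qed

lemma dline_eq:
  assumes "(f has_derivative f') (at x)"
  shows "dline f d x = f' d"
  unfolding dline_def
  by (rule DERIV_imp_deriv, rule line_has_deriv[where t=0]) (use assms in simp)

lemma line_deriv:
  assumes "f differentiable (at (z + complex_of_real t * d))"
  shows "((\<lambda>s. f (z + complex_of_real s * d)) has_real_derivative dline f d (z + complex_of_real t * d)) (at t)"
proof -
  obtain f' where f': "(f has_derivative f') (at (z + complex_of_real t * d))"
    using assms unfolding differentiable_def by blast
  show ?thesis using line_has_deriv[OF f'] dline_eq[OF f'] by simp
qed

lemma second_deriv_min:
  fixes g g' :: "real \<Rightarrow> real"
  assumes e: "e > 0"
    and d: "\<And>t. \<bar>t\<bar> < e \<Longrightarrow> (g has_real_derivative g' t) (at t)"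
    and d2: "(g' has_real_derivative D) (at 0)"
    and mn: "\<And>t. \<bar>t\<bar> < e \<Longrightarrow> g 0 \<le> g t"
  shows "D \<ge> 0"
proof (rule ccontr)
  assume "\<not> D \<ge> 0"
  then have D: "D < 0" by simp
  have g0: "g' 0 = 0"
    by (rule DERIV_local_min[OF d[of 0] e]) (use e mn in auto)
  obtain d1 where d1: "d1 > 0" "\<And>h. h > 0 \<Longrightarrow> h < d1 \<Longrightarrow> g' 0 > g' (0 + h)"
    using DERIV_neg_dec_right[OF d2 D] by blast
  define t where "t = min d1 e / 2"
  have t: "t > 0" "t < d1" "t < e" using d1 e by (auto simp: t_def)
  obtain z where z: "0 < z" "z < t" "g t - g 0 = (t - 0) * g' z"
    using MVT2[of 0 t g g'] t d by force
  have "g' z < 0" using d1(2)[of z] z t g0 by simp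
  then have "g t < g 0" using z t mult_pos_neg[of t "g' z"] by simp
  moreover have "g 0 \<le> g t" using mn[of t] t by simp
  ultimately show False by simp
qed


definition coB :: "complex \<Rightarrow> complex \<Rightarrow> complex \<Rightarrow> real" where
  "coB w1 w2 z = Im (z / w1) / Im (w2 / w1)"
definition coA :: "complex \<Rightarrow> complex \<Rightarrow> complex \<Rightarrow> real" where
  "coA w1 w2 z = Re (z / w1) - coB w1 w2 z * Re (w2 / w1)"

lemma co_decomp:
  assumes "w1 \<noteq> 0" "Im (w2 / w1) \<noteq> 0"
  shows "z = of_real (coA w1 w2 z) * w1 + of_real (coB w1 w2 z) * w2"
proof -
  define t where "t = w2 / w1"
  define \<zeta> where "\<zeta> = z / w1"
  have w2: "w2 = t * w1" using assms unfolding t_def by simp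
  have tt: "Im t \<noteq> 0" using assms t_def by simp
  have z: "z = \<zeta> * w1" using assms unfolding \<zeta>_def by simp
  have "of_real (Re \<zeta> - Im \<zeta> / Im t * Re t) + of_real (Im \<zeta> / Im t) * t = \<zeta>"
    using tt by (intro complex_eqI) simp_all
  then have "z = of_real (Re \<zeta> - Im \<zeta> / Im t * Re t) * w1 + of_real (Im \<zeta> / Im t) * w2"
    unfolding z w2 by (metis distrib_right mult.assoc)
  then show ?thesis unfolding coA_def coB_def t_def[symmetric] \<zeta>_def[symmetric] by simp
qed

lemma co_real:
  assumes "w1 \<noteq> 0" "Im (w2 / w1) \<noteq> 0"
  shows "coB w1 w2 (of_real a * w1 + of_real b * w2) = b"
    "coA w1 w2 (of_real a * w1 + of_real b * w2) = a"
proof -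
  define t where "t = w2 / w1"
  have w2: "w2 = t * w1" using assms unfolding t_def by simp
  have e: "(of_real a * w1 + of_real b * w2) / w1 = of_real a + of_real b * t"
    using assms unfolding w2 by (simp add: field_simps)
  have tt: "Im t \<noteq> 0" using assms t_def by simp
  show "coB w1 w2 (of_real a * w1 + of_real b * w2) = b"
    using tt unfolding coB_def e t_def[symmetric] by simp
  then show "coA w1 w2 (of_real a * w1 + of_real b * w2) = a"
    unfolding coA_def e t_def[symmetric] by simp
qed

lemma lattice_iff:
  assumes "w1 \<noteq> 0" "Im (w2 / w1) \<noteq> 0"
  shows "z \<in> lattice w1 w2 \<longleftrightarrow> coA w1 w2 z \<in> \<int> \<and> coB w1 w2 z \<in> \<int>"
proof
  assume "z \<in> lattice w1 w2"
  then obtain m n :: int where z: "z = of_int m * w1 + of_int n * w2"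
    unfolding lattice_def by blast
  have "z = of_real (of_int m) * w1 + of_real (of_int n) * w2" using z by simp
  then show "coA w1 w2 z \<in> \<int> \<and> coB w1 w2 z \<in> \<int>"
    using co_real[OF assms, of "of_int m" "of_int n"] by simp
next
  assume "coA w1 w2 z \<in> \<int> \<and> coB w1 w2 z \<in> \<int>"
  then obtain m n where m: "coA w1 w2 z = of_int m" and n: "coB w1 w2 z = of_int n"
    by (auto elim!: Ints_cases)
  have "z = of_int m * w1 + of_int n * w2"
    using co_decomp[OF assms, of z] m n by simp
  then show "z \<in> lattice w1 w2" unfolding lattice_def by blast
qed

lemma closed_lattice:
  assumes "w1 \<noteq> 0" "Im (w2 / w1) \<noteq> 0"
  shows "closed (lattice w1 w2)"
proof -
  have eq: "lattice w1 w2 = coA w1 w2 -` \<int> \<inter> coB w1 w2 -` \<int>"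
    using lattice_iff[OF assms] by auto
  have cd: "\<And>x. isCont (\<lambda>x. x / w1) x"
    unfolding divide_inverse by (intro continuous_intros)
  have cRe: "\<And>x. isCont (\<lambda>x. Re (x / w1)) x" by (rule isCont_Re[OF cd])
  have cIm: "\<And>x. isCont (\<lambda>x. Im (x / w1)) x" by (rule isCont_Im[OF cd])
  have cB: "\<And>x. continuous (at x) (coB w1 w2)"
    unfolding coB_def using assms by (intro continuous_intros cIm) auto
  have cA: "\<And>x. continuous (at x) (coA w1 w2)"
    unfolding coA_def by (intro continuous_intros cB cRe)
  show ?thesis unfolding eq
    by (intro closed_Int continuous_closed_vimage closed_Ints cA cB)
qed

lemma lattice_0: "0 \<in> lattice w1 w2"
proof -
  have "(0::complex) = of_int 0 * w1 + of_int 0 * w2" by simp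
  then show ?thesis unfolding lattice_def by blast
qed

lemma lattice_add: "a \<in> lattice w1 w2 \<Longrightarrow> b \<in> lattice w1 w2 \<Longrightarrow> a + b \<in> lattice w1 w2"
proof -
  assume "a \<in> lattice w1 w2" "b \<in> lattice w1 w2"
  then obtain m n m' n' :: int where "a = of_int m * w1 + of_int n * w2" "b = of_int m' * w1 + of_int n' * w2"
    unfolding lattice_def by blast
  then have "a + b = of_int (m+m') * w1 + of_int (n+n') * w2" by (simp add: algebra_simps)
  then show ?thesis unfolding lattice_def by blast
qed

lemma lattice_neg: "a \<in> lattice w1 w2 \<Longrightarrow> - a \<in> lattice w1 w2"
proof -
  assume "a \<in> lattice w1 w2"
  then obtain m n :: int where "a = of_int m * w1 + of_int n * w2"
    unfolding lattice_def by blast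
  then have "- a = of_int (-m) * w1 + of_int (-n) * w2" by (simp add: algebra_simps)
  then show ?thesis unfolding lattice_def by blast
qed

lemma sing_set_eq: "sing_set w1 w2 N p = (\<Union>s\<in>{1..N}. (+) (p s) ` lattice w1 w2)"
  unfolding sing_set_def by fastforce

lemma closed_sing_set:
  assumes "w1 \<noteq> 0" "Im (w2 / w1) \<noteq> 0"
  shows "closed (sing_set w1 w2 N p)"
  unfolding sing_set_eq
  by (intro closed_UN finite_atLeastAtMost ballI closed_translation closed_lattice assms)

lemma countable_lattice: "countable (lattice w1 w2)"
proof -
  have "lattice w1 w2 = (\<lambda>(m::int, n::int). of_int m * w1 + of_int n * w2) ` UNIV"
    unfolding lattice_def by auto
  then show ?thesis by simp
qed

lemma countable_sing_set: "countable (sing_set w1 w2 N p)"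
  unfolding sing_set_eq using countable_lattice by auto

lemma sing_set_shift:
  assumes "z \<in> sing_set w1 w2 N p" "l \<in> lattice w1 w2"
  shows "z + l \<in> sing_set w1 w2 N p"
proof -
  obtain s w where "s \<in> {1..N}" "w \<in> lattice w1 w2" "z = p s + w"
    using assms(1) unfolding sing_set_def by blast
  then show ?thesis unfolding sing_set_def
    using lattice_add[OF _ assms(2)] by (auto intro!: exI[of _ s] exI[of _ "w + l"])
qed

lemma not_sing_set_shift:
  assumes "z \<notin> sing_set w1 w2 N p" "l \<in> lattice w1 w2"
  shows "z + l \<notin> sing_set w1 w2 N p"
  using sing_set_shift[of "z + l" w1 w2 N p "- l"] assms lattice_neg by force

lemma periodic_int:
  assumes "\<forall>z. u (z + w) = u z"
  shows "u (z + of_int k * w) = u z"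
proof (induction k arbitrary: z rule: int_induct[where k=0])
  case base then show ?case by simp
next
  case (step1 i) 
  have "u (z + of_int (i + 1) * w) = u ((z + of_int i * w) + w)" by (simp add: algebra_simps)
  also have "\<dots> = u z" using assms step1 by simp
  finally show ?case .
next
  case (step2 i)
  have "u z = u ((z + of_int (i - 1) * w) + w)" using step2 by (simp add: algebra_simps)
  also have "\<dots> = u (z + of_int (i - 1) * w)" using assms by simp
  finally show ?case by simp
qed

lemma periodic_lattice:
  assumes "\<forall>z. u (z + w1) = u z \<and> u (z + w2) = u z" "l \<in> lattice w1 w2"
  shows "u (z + l) = u z"
proof -
  obtain m n :: int where l: "l = of_int m * w1 + of_int n * w2"
    using assms(2) unfolding lattice_def by blast
  have "u (z + l) = u ((z + of_int m * w1) + of_int n * w2)" by (simp add: l add.assoc)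
  also have "\<dots> = u (z + of_int m * w1)" using periodic_int[of u w2] assms(1) by blast
  also have "\<dots> = u z" using periodic_int[of u w1] assms(1) by blast
  finally show ?thesis .
qed

definition fund :: "complex \<Rightarrow> complex \<Rightarrow> complex set" where
  "fund w1 w2 = (\<lambda>(a, b). of_real a * w1 + of_real b * w2) ` ({0..1::real} \<times> {0..1::real})"

lemma compact_fund: "compact (fund w1 w2)"
  unfolding fund_def
  by (intro compact_continuous_image compact_Times compact_Icc)
     (auto intro!: continuous_intros simp: case_prod_unfold)

lemma fund_rep:
  assumes "w1 \<noteq> 0" "Im (w2 / w1) \<noteq> 0"
  shows "\<exists>z'\<in>fund w1 w2. \<exists>l\<in>lattice w1 w2. z = z' + l"
proof -
  define a b where "a = coA w1 w2 z" and "b = coB w1 w2 z"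
  have z: "z = of_real a * w1 + of_real b * w2" using co_decomp[OF assms] a_def b_def by blast
  define z' where "z' = of_real (frac a) * w1 + of_real (frac b) * w2"
  define l where "l = of_int \<lfloor>a\<rfloor> * w1 + of_int \<lfloor>b\<rfloor> * w2"
  have "z' \<in> fund w1 w2" unfolding fund_def z'_def
    by (rule image_eqI[of _ _ "(frac a, frac b)"]) (auto simp: less_imp_le[OF frac_lt_1])
  moreover have "l \<in> lattice w1 w2" unfolding lattice_def l_def by blast
  moreover have "z = z' + l" unfolding z z'_def l_def frac_def by (simp add: algebra_simps)
  ultimately show ?thesis by blast
qed


lemma exp_poly_deriv:
  "((\<lambda>t. exp (-a * (P + 2*t*Q + t^2))) has_real_derivative
      (exp (-a * (P + 2*t*Q + t^2)) * (-a * (2*Q + 2*t)))) (at t)"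
  by (auto intro!: derivative_eq_intros simp: algebra_simps)

lemma exp_poly_deriv2:
  "((\<lambda>t. exp (-a * (P + 2*t*Q + t^2)) * (-a * (2*Q + 2*t))) has_real_derivative
      (exp (-a * P) * (4*a^2*Q^2 - 2*a))) (at 0)"
  by (auto intro!: derivative_eq_intros simp: algebra_simps power2_eq_square)

lemma min_axis:
  fixes u :: "complex \<Rightarrow> real"
  assumes e: "e > 0"
    and diff: "\<And>t. \<bar>t\<bar> < e \<Longrightarrow> u differentiable (at (x + complex_of_real t * d))"
    and diff1: "dline u d differentiable (at x)"
    and Q: "\<And>t. (cmod (x - y + complex_of_real t * d))^2 = (cmod (x - y))^2 + 2*t*Q + t^2"
    and mn: "\<And>t. \<bar>t\<bar> < e \<Longrightarrow>
       - u x - c * (exp (-a * (cmod (x - y))^2) - e0)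
         \<le> - u (x + complex_of_real t * d) - c * (exp (-a * (cmod (x + complex_of_real t * d - y))^2) - e0)"
  shows "- dline (dline u d) d x - c * (exp (-a * (cmod (x - y))^2) * (4*a^2*Q^2 - 2*a)) \<ge> 0"
proof -
  define P where "P = (cmod (x - y))^2"
  define g where "g t = - u (x + complex_of_real t * d) - c * (exp (-a * (P + 2*t*Q + t^2)) - e0)" for t
  define g' where "g' t = - dline u d (x + complex_of_real t * d) - c * (exp (-a * (P + 2*t*Q + t^2)) * (-a * (2*Q + 2*t)))" for t
  have gd: "(g has_real_derivative g' t) (at t)" if "\<bar>t\<bar> < e" for t
  proof -
    have "((\<lambda>t. c * (exp (-a * (P + 2*t*Q + t^2)) - e0)) has_real_derivative
      c * (exp (-a * (P + 2*t*Q + t^2)) * (-a * (2*Q + 2*t)) - 0)) (at t)"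
      by (intro DERIV_cmult DERIV_diff exp_poly_deriv DERIV_const)
    from DERIV_diff[OF DERIV_minus[OF line_deriv[OF diff[OF that]]] this]
    show ?thesis unfolding g_def g'_def by simp
  qed
  have gd2: "(g' has_real_derivative (- dline (dline u d) d x - c * (exp (-a * P) * (4*a^2*Q^2 - 2*a)))) (at 0)"
  proof -
    have 1: "((\<lambda>s. dline u d (x + complex_of_real s * d)) has_real_derivative dline (dline u d) d x) (at 0)"
      using line_deriv[of "dline u d" x 0 d] diff1 by simp
    from DERIV_diff[OF DERIV_minus[OF 1] DERIV_cmult[OF exp_poly_deriv2[of a P Q]]]
    show ?thesis unfolding g'_def by simp
  qed
  have mn': "g 0 \<le> g t" if "\<bar>t\<bar> < e" for t
  proof -
    have eq: "x + complex_of_real t * d - y = x - y + complex_of_real t * d" by simp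
    have "(cmod (x + complex_of_real t * d - y))^2 = P + 2*t*Q + t^2" unfolding eq using Q[of t] P_def by simp
    then show ?thesis using mn[OF that] unfolding g_def P_def by simp
  qed
  show ?thesis using second_deriv_min[OF e gd gd2 mn'] unfolding P_def by simp
qed

lemma cmod_axis1: "(cmod (c + complex_of_real t * 1))^2 = (cmod c)^2 + 2*t*Re c + t^2"
  unfolding cmod_power2 by (simp add: power2_eq_square algebra_simps)

lemma cmod_axisi: "(cmod (c + complex_of_real t * \<i>))^2 = (cmod c)^2 + 2*t*Im c + t^2"
  unfolding cmod_power2 by (simp add: power2_eq_square algebra_simps)


lemma hopf_local:
  fixes u :: "complex \<Rightarrow> real" and U :: "complex set" and lam :: real
  assumes U: "open U"
    and cont: "continuous_on U u"
    and diff: "\<And>z. z \<in> U \<Longrightarrow> u differentiable (at z)"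
    and diff1: "\<And>z. z \<in> U \<Longrightarrow> dline u 1 differentiable (at z)"
    and diffi: "\<And>z. z \<in> U \<Longrightarrow> dline u \<i> differentiable (at z)"
    and le0: "\<And>z. z \<in> U \<Longrightarrow> u z \<le> 0"
    and lap: "\<And>z. z \<in> U \<Longrightarrow> u z < 0 \<Longrightarrow> dline (dline u 1) 1 z + dline (dline u \<i>) \<i> z \<ge> lam * u z"
    and lam: "lam > 0"
    and z0: "z0 \<in> U" "u z0 = 0"
  shows "\<exists>R>0. \<forall>z\<in>ball z0 R. u z = 0"
proof -
  obtain R where R: "R > 0" "cball z0 R \<subseteq> U" using U z0 open_contains_cball by blast
  have "\<forall>z\<in>ball z0 (R/2). u z = 0"
  proof (rule ccontr)
    assume "\<not> (\<forall>z\<in>ball z0 (R/2). u z = 0)"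
    then obtain z1 where z1: "z1 \<in> ball z0 (R/2)" "u z1 \<noteq> 0" by blast
    define Z where "Z = {z \<in> cball z0 R. u z = 0}"
    have "closed Z" unfolding Z_def
      by (rule continuous_closed_preimage_constant[OF continuous_on_subset[OF cont R(2)] closed_cball])
    moreover have "bounded Z" unfolding Z_def by (rule bounded_subset[OF bounded_cball]) auto
    ultimately have cZ: "compact Z" by (simp add: compact_eq_bounded_closed)
    have z0Z: "z0 \<in> Z" unfolding Z_def using z0 R by auto
    have Zne: "Z \<noteq> {}" using z0Z by blast
    have cd: "continuous_on Z (dist z1)" by (intro continuous_intros)
    obtain x0 where x0: "x0 \<in> Z" "\<And>z. z \<in> Z \<Longrightarrow> dist z1 x0 \<le> dist z1 z"
      using continuous_attains_inf[OF cZ Zne cd] by blast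
    define \<rho> where "\<rho> = dist z1 x0"
    have ux0: "u x0 = 0" "x0 \<in> cball z0 R" using x0 Z_def by auto
    have \<rho>pos: "\<rho> > 0" using z1 ux0 unfolding \<rho>_def by auto
    have \<rho>le: "\<rho> < R/2" using x0(2)[OF z0Z] z1(1) unfolding \<rho>_def by (simp add: dist_commute)
    have inU: "z \<in> U" "dist z0 z \<le> R" if "dist z1 z \<le> \<rho>" for z
    proof -
      have "dist z0 z \<le> dist z0 z1 + dist z1 z" by (rule dist_triangle)
      then show "dist z0 z \<le> R" using that \<rho>le z1(1) by simp
      then show "z \<in> U" using R(2) by auto
    qed
    have neg: "u z < 0" if "dist z1 z < \<rho>" for z
    proof -
      have "u z \<noteq> 0"
      proof
        assume "u z = 0"
        then have "z \<in> Z" unfolding Z_def using inU[of z] that by simp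
        then show False using x0(2)[of z] that unfolding \<rho>_def by simp
      qed
      then show ?thesis using le0 inU[of z] that by force
    qed
    have "z1 + of_real (\<rho>/2) \<in> sphere z1 (\<rho>/2)" using \<rho>pos by (simp add: dist_norm)
    then have sph: "sphere z1 (\<rho>/2) \<noteq> {}" by blast
    have sphU: "sphere z1 (\<rho>/2) \<subseteq> U" using inU \<rho>pos by auto
    obtain zs where zs: "zs \<in> sphere z1 (\<rho>/2)" "\<And>z. z \<in> sphere z1 (\<rho>/2) \<Longrightarrow> u z \<le> u zs"
      using continuous_attains_sup[OF compact_sphere sph continuous_on_subset[OF cont sphU]] by blast
    define \<delta> where "\<delta> = - u zs"
    have \<delta>pos: "\<delta> > 0" unfolding \<delta>_def using neg[of zs] zs(1) \<rho>pos by simp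
    have inner: "u z \<le> - \<delta>" if "dist z1 z = \<rho>/2" for z using zs(2)[of z] that \<delta>_def by simp
    define \<alpha> where "\<alpha> = (4 + lam) / \<rho>^2 + 1"
    have \<alpha>1: "\<alpha> \<ge> 1" unfolding \<alpha>_def using lam \<rho>pos by simp
    have \<alpha>\<rho>: "\<alpha> * \<rho>^2 \<ge> 4 + lam" unfolding \<alpha>_def using lam \<rho>pos by (simp add: field_simps)
    define e0 where "e0 = exp (-\<alpha> * \<rho>^2)"
    have e0pos: "e0 > 0" unfolding e0_def by simp
    define \<phi> where "\<phi> z = - u z - \<delta> * (exp (-\<alpha> * (cmod (z - z1))^2) - e0)" for z
    define A where "A = cball z1 \<rho> - ball z1 (\<rho>/2)"
    have AU: "A \<subseteq> U" unfolding A_def using inU by auto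
    have cA: "compact A" unfolding A_def by (intro compact_diff compact_cball open_ball)
    have x0A: "x0 \<in> A" unfolding A_def \<rho>_def using \<rho>pos \<rho>_def by auto
    have contphi: "continuous_on A \<phi>" unfolding \<phi>_def
      by (intro continuous_intros continuous_on_subset[OF cont AU])
    obtain xm where xm: "xm \<in> A" "\<And>z. z \<in> A \<Longrightarrow> \<phi> xm \<le> \<phi> z"
      using continuous_attains_inf[OF cA _ contphi] x0A by blast
    have phixm: "\<phi> xm \<ge> 0"
    proof (rule ccontr)
      assume "\<not> \<phi> xm \<ge> 0"
      then have phin: "\<phi> xm < 0" by simp
      define r where "r = dist z1 xm"
      have r: "\<rho>/2 \<le> r" "r \<le> \<rho>" using xm(1) unfolding A_def r_def by auto
      have cm: "cmod (xm - z1) = r" unfolding r_def by (simp add: dist_norm norm_minus_commute)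
      consider "r = \<rho>" | "r = \<rho>/2" | "\<rho>/2 < r \<and> r < \<rho>" using r by linarith
      then show False
      proof cases
        case 1
        have "\<phi> xm = - u xm" unfolding \<phi>_def cm 1 e0_def by simp
        then show False using phin le0[of xm] xm(1) AU by auto
      next
        case 2
        have "exp (-\<alpha> * (cmod (xm - z1))^2) \<le> 1" using \<alpha>1 by simp
        then have h1: "exp (-\<alpha> * (cmod (xm - z1))^2) - e0 \<le> 1" using e0pos by linarith
        have "\<delta> * (exp (-\<alpha> * (cmod (xm - z1))^2) - e0) \<le> \<delta>"
          using mult_left_mono[OF h1, of \<delta>] \<delta>pos by simp
        moreover have "u xm \<le> - \<delta>" using inner[of xm] 2 r_def by simp
        ultimately show False using phin unfolding \<phi>_def by simp
      next
        case 3
        define e where "e = min (r - \<rho>/2) (\<rho> - r)"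
        have epos: "e > 0" using 3 unfolding e_def by simp
        have lineA: "xm + complex_of_real t * d \<in> A" if "\<bar>t\<bar> < e" "cmod d = 1" for t d
        proof -
          have "dist xm (xm + complex_of_real t * d) = \<bar>t\<bar>"
            using that by (simp add: dist_norm norm_mult)
          moreover have "dist (xm + complex_of_real t * d) xm = dist xm (xm + complex_of_real t * d)"
            by (rule dist_commute)
          moreover have "dist z1 (xm + complex_of_real t * d) \<le> dist z1 xm + dist xm (xm + complex_of_real t * d)"
            by (rule dist_triangle)
          moreover have "dist z1 xm \<le> dist z1 (xm + complex_of_real t * d) + dist (xm + complex_of_real t * d) xm"
            by (rule dist_triangle)
          ultimately have "dist z1 (xm + complex_of_real t * d) \<le> r + \<bar>t\<bar>"
               "dist z1 (xm + complex_of_real t * d) \<ge> r - \<bar>t\<bar>"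
            unfolding r_def by linarith+
          then show ?thesis unfolding A_def using that e_def by auto
        qed
        have ax: "- dline (dline u d) d xm - \<delta> * (exp (-\<alpha> * (cmod (xm - z1))^2) * (4*\<alpha>^2*Q^2 - 2*\<alpha>)) \<ge> 0"
          if d: "cmod d = 1" and Q: "\<And>t. (cmod (xm - z1 + complex_of_real t * d))^2 = (cmod (xm - z1))^2 + 2*t*Q + t^2"
             and dd: "dline u d differentiable (at xm)"
          for d Q
        proof (rule min_axis[OF epos _ dd Q])
          show "u differentiable at (xm + complex_of_real t * d)" if "\<bar>t\<bar> < e" for t
            using diff lineA[OF that d] AU by auto
          show "- u xm - \<delta> * (exp (- \<alpha> * (cmod (xm - z1))\<^sup>2) - e0)
            \<le> - u (xm + complex_of_real t * d) - \<delta> * (exp (- \<alpha> * (cmod (xm + complex_of_real t * d - z1))\<^sup>2) - e0)"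
            if "\<bar>t\<bar> < e" for t
            using xm(2)[OF lineA[OF that d]] unfolding \<phi>_def by simp
        qed
        have xmU: "xm \<in> U" using xm(1) AU by auto
        have a1: "- dline (dline u 1) 1 xm - \<delta> * (exp (-\<alpha> * (cmod (xm - z1))^2) * (4*\<alpha>^2*(Re (xm - z1))^2 - 2*\<alpha>)) \<ge> 0"
          by (rule ax) (use cmod_axis1[of "xm - z1"] diff1 xmU in auto)
        have a2: "- dline (dline u \<i>) \<i> xm - \<delta> * (exp (-\<alpha> * (cmod (xm - z1))^2) * (4*\<alpha>^2*(Im (xm - z1))^2 - 2*\<alpha>)) \<ge> 0"
          by (rule ax) (use cmod_axisi[of "xm - z1"] diffi xmU in auto)
        define E where "E = exp (-\<alpha> * (cmod (xm - z1))^2)"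
        define P where "P = (cmod (xm - z1))^2"
        have Epos: "E > 0" unfolding E_def by simp
        have P: "P = (Re (xm - z1))^2 + (Im (xm - z1))^2" unfolding P_def by (simp add: cmod_power2)
        have sum: "- (dline (dline u 1) 1 xm + dline (dline u \<i>) \<i> xm) \<ge> \<delta> * E * (4*\<alpha>^2*P - 4*\<alpha>)"
          using a1 a2 unfolding E_def[symmetric] P by (simp add: algebra_simps)
        have uneg: "u xm < 0" using neg[of xm] 3 r_def by simp
        have lapx: "dline (dline u 1) 1 xm + dline (dline u \<i>) \<i> xm \<ge> lam * u xm"
          using lap[OF xmU uneg] .
        have phi2: "- u xm < \<delta> * E"
        proof -
          have "- u xm < \<delta> * (E - e0)" using phin unfolding \<phi>_def E_def by simp
          then show ?thesis using mult_pos_pos[OF \<delta>pos e0pos] by (simp add: right_diff_distrib)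
        qed
        have "\<delta> * E * (4*\<alpha>^2*P - 4*\<alpha>) \<le> lam * (- u xm)" using sum lapx by simp
        also have "\<dots> < lam * (\<delta> * E)" using mult_strict_left_mono[OF phi2 lam] by simp
        finally have "\<delta> * E * (4*\<alpha>^2*P - 4*\<alpha>) < \<delta> * E * lam" by (simp add: algebra_simps)
        then have lt: "4*\<alpha>^2*P - 4*\<alpha> < lam" using \<delta>pos Epos by simp
        have "P \<ge> \<rho>^2/4"
        proof -
          have "(\<rho>/2)^2 \<le> r^2" using r \<rho>pos by (intro power_mono) auto
          then show ?thesis unfolding P_def cm by (simp add: power_divide)
        qed
        then have "4*\<alpha>^2*P \<ge> \<alpha>^2*\<rho>^2" using mult_left_mono[of "\<rho>^2" "4*P" "\<alpha>^2"] by (simp add: algebra_simps)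
        moreover have "\<alpha>^2*\<rho>^2 - 4*\<alpha> \<ge> lam"
        proof -
          have "\<alpha>^2*\<rho>^2 - 4*\<alpha> = \<alpha> * (\<alpha> * \<rho>^2 - 4)" by (simp add: power2_eq_square algebra_simps)
          also have "\<dots> \<ge> 1 * lam" using \<alpha>1 \<alpha>\<rho> lam by (intro mult_mono) auto
          finally show ?thesis by simp
        qed
        ultimately show False using lt by simp
      qed
    qed
    have phiA: "\<And>z. z \<in> A \<Longrightarrow> \<phi> z \<ge> 0" using phixm xm(2) by force
    define n where "n = (z1 - x0) / of_real \<rho>"
    have cn: "cmod n = 1" unfolding n_def \<rho>_def using \<rho>pos \<rho>_def
      by (simp add: norm_divide dist_norm norm_minus_commute)
    have x0n: "x0 - z1 = - of_real \<rho> * n" unfolding n_def using \<rho>pos by simp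
    have cmL: "(cmod (x0 + complex_of_real t * n - z1))^2 = (t - \<rho>)^2" for t
    proof -
      have "x0 + complex_of_real t * n - z1 = of_real (t - \<rho>) * n" using x0n by (simp add: algebra_simps)
      then show ?thesis using cn by (simp add: norm_mult del: of_real_diff flip: of_real_diff)
    qed
    define G where "G t = - u (x0 + complex_of_real t * n) - \<delta> * (exp (-\<alpha> * (t - \<rho>)^2) - e0)" for t
    have G\<phi>: "G t = \<phi> (x0 + complex_of_real t * n)" for t unfolding G_def \<phi>_def cmL by simp
    have x0U: "x0 \<in> U" using x0A AU by auto
    obtain r0 where r0: "r0 > 0" "ball x0 r0 \<subseteq> U" using U x0U open_contains_ball by blast
    have ud: "((\<lambda>t. u (x0 + complex_of_real t * n)) has_real_derivative dline u n x0) (at 0)"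
      using line_deriv[of u x0 0 n] diff[OF x0U] by simp
    have D0: "dline u n x0 = 0"
    proof (rule DERIV_local_max[OF ud r0(1)], intro allI impI)
      fix y :: real assume "\<bar>0 - y\<bar> < r0"
      then have "x0 + complex_of_real y * n \<in> ball x0 r0" using cn by (simp add: dist_norm norm_mult)
      then show "u (x0 + complex_of_real y * n) \<le> u (x0 + complex_of_real 0 * n)"
        using le0 r0(2) ux0 by auto
    qed
    have ed: "((\<lambda>t. exp (-\<alpha> * (t - \<rho>)^2) - e0) has_real_derivative (exp (-\<alpha> * (0 - \<rho>)^2) * (-\<alpha> * (2 * (0 - \<rho>))) - 0)) (at 0)"
      by (auto intro!: derivative_eq_intros simp: algebra_simps)
    have Gd: "(G has_real_derivative (- 0 - \<delta> * (e0 * (2 * \<alpha> * \<rho>)))) (at 0)"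
    proof -
      from DERIV_diff[OF DERIV_minus[OF ud] DERIV_cmult[OF ed, of \<delta>]]
      show ?thesis unfolding G_def D0 e0_def by (simp add: algebra_simps)
    qed
    have "- 0 - \<delta> * (e0 * (2 * \<alpha> * \<rho>)) < 0" using \<delta>pos e0pos \<alpha>1 \<rho>pos by simp
    from DERIV_neg_dec_right[OF Gd this]
    obtain d where d: "d > 0" "\<And>h. h > 0 \<Longrightarrow> h < d \<Longrightarrow> G 0 > G (0 + h)" by blast
    define t where "t = min d (\<rho>/2) / 2"
    have t: "t > 0" "t < d" "t \<le> \<rho>/2" using d \<rho>pos unfolding t_def by auto
    have G0: "G 0 = 0" unfolding G_def e0_def using ux0 by (simp add: power2_eq_square)
    have "x0 + complex_of_real t * n \<in> A"
    proof -
      have "(cmod (x0 + complex_of_real t * n - z1))^2 = (\<rho> - t)^2" using cmL[of t] by (simp add: power2_commute)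
      then have "cmod (x0 + complex_of_real t * n - z1) = \<rho> - t" using t \<rho>pos
        by (subst (asm) power2_eq_iff_nonneg) auto
      then have "dist z1 (x0 + complex_of_real t * n) = \<rho> - t" by (simp add: dist_norm norm_minus_commute)
      then show ?thesis unfolding A_def using t by simp
    qed
    then have "G t \<ge> 0" using phiA G\<phi> by simp
    moreover have "G t < 0" using d(2)[of t] t G0 by simp
    ultimately show False by simp
  qed
  then show ?thesis using R(1) by (intro exI[of _ "R/2"]) auto
qed


lemma max_axis:
  fixes u :: "complex \<Rightarrow> real"
  assumes r: "r > 0"
    and diff: "\<And>t. \<bar>t\<bar> < r \<Longrightarrow> u differentiable (at (z + complex_of_real t * d))"
    and diff1: "dline u d differentiable (at z)"
    and mx: "\<And>t. \<bar>t\<bar> < r \<Longrightarrow> u (z + complex_of_real t * d) \<le> u z"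
  shows "dline u d z = 0" "dline (dline u d) d z \<le> 0"
proof -
  have ud: "((\<lambda>t. u (z + complex_of_real t * d)) has_real_derivative dline u d z) (at 0)"
    using line_deriv[of u z 0 d] diff[of 0] r by simp
  show "dline u d z = 0"
    by (rule DERIV_local_max[OF ud r]) (use mx in auto)
  define g where "g t = - u (z + complex_of_real t * d)" for t
  define g' where "g' t = - dline u d (z + complex_of_real t * d)" for t
  have gd: "(g has_real_derivative g' t) (at t)" if "\<bar>t\<bar> < r" for t
    unfolding g_def g'_def by (intro DERIV_minus line_deriv diff that)
  have gd2: "(g' has_real_derivative - dline (dline u d) d z) (at 0)"
    unfolding g'_def using line_deriv[of "dline u d" z 0 d] diff1 by (intro DERIV_minus) simp
  have "- dline (dline u d) d z \<ge> 0"
    by (rule second_deriv_min[OF r gd gd2]) (use mx in \<open>auto simp: g_def\<close>)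
  then show "dline (dline u d) d z \<le> 0" by simp
qed

lemma mult_ge1:
  assumes "q \<in> sing_set w1 w2 N p"
  shows "mult w1 w2 N p q \<ge> 1"
proof -
  obtain s w where s: "s \<in> {1..N}" "w \<in> lattice w1 w2" "q = p s + w"
    using assms unfolding sing_set_def by blast
  have "s \<in> {s \<in> {1..N}. q - p s \<in> lattice w1 w2}" using s by simp
  moreover have "finite {s \<in> {1..N}. q - p s \<in> lattice w1 w2}" by simp
  ultimately have "card {s \<in> {1..N}. q - p s \<in> lattice w1 w2} > 0"
    by (auto simp: card_gt_0_iff)
  then show ?thesis unfolding mult_def by simp
qed

lemma sing_small:
  assumes sol: "is_solution w1 w2 lam N p u" and q: "q \<in> sing_set w1 w2 N p"
  shows "\<exists>\<delta>>0. \<forall>x. x \<in> ball q \<delta> \<and> x \<noteq> q \<longrightarrow> u x < c"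
proof -
  define m where "m = mult w1 w2 N p q"
  have m1: "real m \<ge> 1" using mult_ge1[OF q] m_def by simp
  obtain r f where r: "r > 0" "smooth_on (ball q r) f"
    and uf: "\<And>x. x \<in> ball q r - {q} \<Longrightarrow> u x = real m * ln ((cmod (x - q))\<^sup>2) + f x"
    using sol q unfolding is_solution_def m_def by blast
  have "continuous_on (ball q r) f" using r(2) unfolding smooth_on_def
    by (metis iter_pd.simps(1))
  then have "isCont f q" using r(1) continuous_on_eq_continuous_at[OF open_ball, of q r f] by simp
  then obtain \<delta>1 where \<delta>1: "\<delta>1 > 0" "\<And>x. dist x q < \<delta>1 \<Longrightarrow> dist (f x) (f q) < 1"
    unfolding continuous_at_eps_delta by (metis zero_less_one)
  define \<eta> where "\<eta> = exp ((c - f q - 1) / 2)"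
  have \<eta>pos: "\<eta> > 0" unfolding \<eta>_def by simp
  have \<eta>2: "\<eta>^2 = exp (c - f q - 1)" unfolding \<eta>_def by (simp add: power2_eq_square flip: exp_add)
  define \<delta> where "\<delta> = min r (min \<delta>1 (min 1 \<eta>))"
  have "\<delta> > 0" unfolding \<delta>_def using r \<delta>1 \<eta>pos by simp
  moreover have "u x < c" if x: "x \<in> ball q \<delta>" "x \<noteq> q" for x
  proof -
    define d where "d = cmod (x - q)"
    have d: "0 < d" "d < 1" "d < \<eta>" "d < \<delta>1" "d < r" using x unfolding d_def \<delta>_def
      by (auto simp: dist_norm norm_minus_commute)
    have dd: "0 < d^2" "d^2 < 1" "d^2 < \<eta>^2" using d by (auto intro: power_strict_mono simp: power_less_one_iff)
    have L: "ln (d^2) < 0" using dd by simp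
    have L2: "ln (d^2) < c - f q - 1"
      using dd ln_less_cancel_iff[of "d^2" "exp (c - f q - 1)"] \<eta>2 by simp
    have "real m * ln (d^2) \<le> 1 * ln (d^2)" using m1 L by (intro mult_right_mono_neg) auto
    moreover have "f x < f q + 1" using \<delta>1(2)[of x] d unfolding d_def by (auto simp: dist_norm dist_real_def)
    moreover have "u x = real m * ln (d^2) + f x" using uf[of x] x d unfolding d_def by (simp add: dist_norm norm_minus_commute)
    ultimately show ?thesis using L2 by simp
  qed
  ultimately show ?thesis by blast
qed


theorem lemma3p2:
  fixes w1 w2 :: complex and lam :: real and N :: nat
    and p :: "nat \<Rightarrow> complex" and u :: "complex \<Rightarrow> real"
  assumes "w1 \<noteq> 0" and "Im (w2 / w1) \<noteq> 0"
    and "N \<ge> 1"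
    and "lam > 0"
    and "is_solution w1 w2 lam N p u"
  shows "\<forall>z. z \<notin> sing_set w1 w2 N p \<longrightarrow> u z < 0"
proof -
  note w = assms(1,2)
  note lam = assms(4)
  note sol = assms(5)
  define S where "S = sing_set w1 w2 N p"
  define U where "U = - S"
  have per: "\<forall>z. u (z + w1) = u z \<and> u (z + w2) = u z" using sol unfolding is_solution_def by blast
  have sm: "smooth_on U u" using sol unfolding is_solution_def U_def S_def by blast
  have eq: "\<And>z. z \<in> U \<Longrightarrow> (1 - exp (u z)) * laplacian u z - exp (u z) * grad_sq u z
          = - lam * exp (u z) * (exp (u z) - 1)\<^sup>2"
    using sol unfolding is_solution_def U_def S_def by blast
  have oU: "open U" unfolding U_def S_def using closed_sing_set[OF w] by (simp add: open_Compl)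
  have cont: "continuous_on U u" using sm unfolding smooth_on_def by (metis iter_pd.simps(1))
  have diff: "\<And>z. z \<in> U \<Longrightarrow> u differentiable (at z)"
    using sm differentiable_on_eq_differentiable_at[OF oU] unfolding smooth_on_def
    by (metis iter_pd.simps(1))
  have diff1: "\<And>z. z \<in> U \<Longrightarrow> dline u 1 differentiable (at z)"
  proof -
    fix z assume "z \<in> U"
    have "iter_pd [True] u differentiable_on U" using sm unfolding smooth_on_def by blast
    then show "dline u 1 differentiable (at z)"
      using differentiable_on_eq_differentiable_at[OF oU, of "dline u 1"] \<open>z \<in> U\<close> by (simp add: pd1_dline)
  qed
  have diffi: "\<And>z. z \<in> U \<Longrightarrow> dline u \<i> differentiable (at z)"
  proof -
    fix z assume "z \<in> U"
    have "iter_pd [False] u differentiable_on U" using sm unfolding smooth_on_def by blast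
    then show "dline u \<i> differentiable (at z)"
      using differentiable_on_eq_differentiable_at[OF oU, of "dline u \<i>"] \<open>z \<in> U\<close> by (simp add: pd2_dline)
  qed
  have lapeq: "laplacian u z = dline (dline u 1) 1 z + dline (dline u \<i>) \<i> z" for z
    unfolding laplacian_def pd1_dline pd2_dline ..
  have gradeq: "grad_sq u z = (dline u 1 z)^2 + (dline u \<i> z)^2" for z
    unfolding grad_sq_def pd1_dline pd2_dline ..
  have shiftU: "x + l \<in> U \<longleftrightarrow> x \<in> U" if "l \<in> lattice w1 w2" for x l
    using sing_set_shift[OF _ that] not_sing_set_shift[OF _ that] unfolding U_def S_def by blast
  have per': "u (x + l) = u x" if "l \<in> lattice w1 w2" for x l
    using periodic_lattice[OF per that] .
  have le0: "u z \<le> 0" if zU: "z \<in> U" for z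
  proof (rule ccontr)
    assume "\<not> u z \<le> 0"
    then have cpos: "u z > 0" by simp
    define c where "c = u z"
    define T where "T = {x. x \<in> U \<and> u x \<ge> c}"
    have "open (- T)" unfolding open_contains_ball
    proof
      fix x assume x: "x \<in> - T"
      show "\<exists>e>0. ball x e \<subseteq> - T"
      proof (cases "x \<in> S")
        case True
        obtain \<delta> where \<delta>: "\<delta> > 0" "\<And>y. y \<in> ball x \<delta> \<and> y \<noteq> x \<longrightarrow> u y < c"
          using sing_small[OF sol True[unfolded S_def], of c] by blast
        have "ball x \<delta> \<subseteq> - T"
        proof
          fix y assume y: "y \<in> ball x \<delta>"
          show "y \<in> - T"
          proof (cases "y = x")
            case True then show ?thesis using \<open>x \<in> S\<close> unfolding T_def U_def by simp
          next
            case False then show ?thesis using \<delta>(2)[of y] y unfolding T_def by simp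
          qed
        qed
        then show ?thesis using \<delta> by blast
      next
        case False
        then have xU: "x \<in> U" unfolding U_def by simp
        then have ux: "u x < c" using x unfolding T_def by simp
        obtain e1 where e1: "e1 > 0" "ball x e1 \<subseteq> U" using oU xU open_contains_ball by blast
        have "isCont u x" using cont oU xU continuous_on_eq_continuous_at by blast
        then obtain e2 where e2: "e2 > 0" "\<And>y. dist y x < e2 \<Longrightarrow> dist (u y) (u x) < c - u x"
          unfolding continuous_at_eps_delta using ux by (metis diff_gt_0_iff_gt)
        have "ball x (min e1 e2) \<subseteq> - T"
        proof
          fix y assume y: "y \<in> ball x (min e1 e2)"
          then have "dist (u y) (u x) < c - u x" using e2(2)[of y] by (simp add: dist_commute)
          then have "u y < c" by (simp add: dist_real_def)
          then show "y \<in> - T" unfolding T_def by simp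
        qed
        then show ?thesis using e1 e2 by (intro exI[of _ "min e1 e2"]) simp
      qed
    qed
    then have cT: "closed T" by (simp add: closed_def)
    define K where "K = fund w1 w2 \<inter> T"
    have cK: "compact K" unfolding K_def using compact_fund cT by blast
    obtain z' l where z': "z' \<in> fund w1 w2" "l \<in> lattice w1 w2" "z = z' + l"
      using fund_rep[OF w, of z] by blast
    have "z' \<in> K" using z' zU shiftU per' unfolding K_def T_def c_def by auto
    then have Kne: "K \<noteq> {}" by blast
    have KU: "K \<subseteq> U" unfolding K_def T_def by auto
    obtain zm where zm: "zm \<in> K" "\<And>y. y \<in> K \<Longrightarrow> u y \<le> u zm"
      using continuous_attains_sup[OF cK Kne continuous_on_subset[OF cont KU]] by blast
    have zmU: "zm \<in> U" using zm KU by auto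
    have Mc: "u zm \<ge> c" using zm(1) unfolding K_def T_def by simp
    have glob: "u y \<le> u zm" if "y \<in> U" for y
    proof -
      obtain y' l where y': "y' \<in> fund w1 w2" "l \<in> lattice w1 w2" "y = y' + l"
        using fund_rep[OF w, of y] by blast
      have y'U: "y' \<in> U" using y' that shiftU by auto
      have "u y = u y'" using y' per' by simp
      moreover have "u y' \<le> u zm"
      proof (cases "u y' \<ge> c")
        case True then have "y' \<in> K" using y' y'U unfolding K_def T_def by simp
        then show ?thesis using zm(2) by blast
      next
        case False then show ?thesis using Mc by simp
      qed
      ultimately show ?thesis by simp
    qed
    obtain r where r: "r > 0" "ball zm r \<subseteq> U" using oU zmU open_contains_ball by blast
    have ax: "dline u d zm = 0 \<and> dline (dline u d) d zm \<le> 0" if d: "cmod d = 1"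
       and dd: "dline u d differentiable (at zm)" for d
    proof -
      have inb: "zm + complex_of_real t * d \<in> U" if "\<bar>t\<bar> < r" for t
        using r(2) that d by (auto simp: dist_norm norm_mult)
      have h1: "\<And>t. \<bar>t\<bar> < r \<Longrightarrow> u differentiable (at (zm + complex_of_real t * d))"
        using diff inb by blast
      have h2: "\<And>t. \<bar>t\<bar> < r \<Longrightarrow> u (zm + complex_of_real t * d) \<le> u zm"
        using glob inb by blast
      show ?thesis using max_axis[OF r(1) h1 dd h2] by blast
    qed
    have a1: "dline u 1 zm = 0 \<and> dline (dline u 1) 1 zm \<le> 0" using ax diff1 zmU by simp
    have a2: "dline u \<i> zm = 0 \<and> dline (dline u \<i>) \<i> zm \<le> 0" using ax diffi zmU by simp
    define E where "E = exp (u zm)"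
    have E1: "E > 1" unfolding E_def using Mc cpos c_def by simp
    have "laplacian u zm \<le> 0" using a1 a2 lapeq by simp
    then have lhs: "(1 - E) * laplacian u zm - E * grad_sq u zm \<ge> 0"
      using a1 a2 gradeq E1 by (simp add: mult_nonpos_nonpos)
    have "- lam * E * (E - 1)\<^sup>2 < 0" using lam E1 by (simp add: mult_pos_pos)
    then show False using eq[OF zmU] lhs unfolding E_def by simp
  qed
  have lap: "dline (dline u 1) 1 z + dline (dline u \<i>) \<i> z \<ge> lam * u z" if zU: "z \<in> U" and neg: "u z < 0" for z
  proof -
    define E where "E = exp (u z)"
    define L where "L = laplacian u z"
    define G where "G = grad_sq u z"
    have E: "0 < E" "E < 1" unfolding E_def using neg by auto
    have G: "G \<ge> 0" unfolding G_def grad_sq_def by simp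
    have e: "(1 - E) * L - E * G = - lam * E * (E - 1)\<^sup>2" using eq[OF zU] unfolding E_def L_def G_def .
    have h1: "(1 - E) * L \<ge> (1 - E) * (- lam * E * (1 - E))"
    proof -
      have "(1 - E) * L = E * G - lam * E * (1 - E)^2" using e by (simp add: power2_commute algebra_simps)
      moreover have "E * G \<ge> 0" using E G by simp
      ultimately show ?thesis by (simp add: power2_eq_square algebra_simps)
    qed
    have h2: "L \<ge> - lam * E * (1 - E)" using h1 E mult_le_cancel_left_pos[of "1 - E" "- lam * E * (1 - E)" L] by simp
    have h3: "E * (1 - E) \<le> - u z"
    proof -
      have "E * (1 - E) \<le> 1 * (1 - E)" using E by (intro mult_right_mono) auto
      moreover have "1 + u z \<le> E" unfolding E_def by (rule exp_ge_add_one_self)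
      ultimately show ?thesis by simp
    qed
    have "lam * u z \<le> - lam * E * (1 - E)" using mult_left_mono[OF h3, of lam] lam by simp
    then show ?thesis using h2 lapeq[of z] unfolding L_def by simp
  qed
  show ?thesis
  proof (intro allI impI)
    fix z assume "z \<notin> sing_set w1 w2 N p"
    then have zU: "z \<in> U" unfolding U_def S_def by simp
    show "u z < 0"
    proof (rule ccontr)
      assume "\<not> u z < 0"
      then have uz: "u z = 0" using le0[OF zU] by simp
      define Zs where "Zs = {x \<in> U. u x = 0}"
      have "open Zs" unfolding open_contains_ball
      proof
        fix x assume x: "x \<in> Zs"
        then have xU: "x \<in> U" "u x = 0" unfolding Zs_def by auto
        obtain R1 where R1: "R1 > 0" "\<forall>y\<in>ball x R1. u y = 0"
          using hopf_local[OF oU cont diff diff1 diffi le0 lap lam xU] by blast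
        obtain R2 where R2: "R2 > 0" "ball x R2 \<subseteq> U" using oU xU open_contains_ball by blast
        have "ball x (min R1 R2) \<subseteq> Zs" using R1 R2 unfolding Zs_def by auto
        then show "\<exists>e>0. ball x e \<subseteq> Zs" using R1 R2 by (intro exI[of _ "min R1 R2"]) simp
      qed
      then have op: "openin (top_of_set U) Zs" by (intro open_subset) (auto simp: Zs_def)
      have cl: "closedin (top_of_set U) Zs" unfolding Zs_def
        by (rule continuous_closedin_preimage_constant[OF cont])
      have "connected U" unfolding U_def S_def
        by (intro path_connected_imp_connected path_connected_complement_countable countable_sing_set) simp
      then have "Zs = {} \<or> Zs = U" using op cl connected_clopen by blast
      moreover have "z \<in> Zs" using zU uz unfolding Zs_def by simp
      ultimately have all0: "\<And>y. y \<in> U \<Longrightarrow> u y = 0" unfolding Zs_def by blast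
      define q where "q = p 1"
      have "q = p 1 + 0" unfolding q_def by simp
      then have qS: "q \<in> S" unfolding S_def sing_set_def using assms(3) lattice_0 by fastforce
      obtain \<delta> where \<delta>: "\<delta> > 0" "\<And>y. y \<in> ball q \<delta> \<and> y \<noteq> q \<longrightarrow> u y < 0"
        using sing_small[OF sol qS[unfolded S_def], of 0] by blast
      have "uncountable (ball q \<delta> - S)"
        unfolding S_def by (intro uncountable_minus_countable uncountable_ball \<delta>(1) countable_sing_set)
      then obtain y where y: "y \<in> ball q \<delta>" "y \<notin> S" by (metis Diff_iff countable_empty ex_in_conv)
      have "y \<noteq> q" using y qS by auto
      then have "u y < 0" using \<delta>(2)[of y] y by simp
      moreover have "u y = 0" using all0[of y] y unfolding U_def by simp
      ultimately show False by simp
    qed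
  qed
qed

end
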